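(* For a thermodynamic Stephani universe, the fluid velocity $u$ satisfies $\sigma=0$ and $d\!\left[\mathbf a-\frac13\theta u\right]=0$ (i.e. the comoving observer can measure isotropic radiation) if and only if $b''(R)=0$, i.e. $b(R)=b_1+b_2R$ with constants $b_1,b_2$. In that case the function $\beta=R\alpha$ satisfies $d\ln\beta=\mathbf a-\frac13\theta u$, and the test radiation fluid has $\rho_r=3p_r=a_R\Theta_r^4$ with $\Theta_r=\Theta_0\frac{R_0}{R}\left[1+\frac{b_2wR}{1+b_1w}\right]$.
   Context: Thermodynamic Stephani universe: $ds^2=-\alpha^2dt^2+\Omega^2(dx^2+dy^2+dz^2)$ with $L=R(t)/(1+b(t)w)$, $\Omega=\frac{w}{2z}L$, $\alpha=R\,\partial_R\ln L=\frac{1+(b-Rb')w}{1+bw}$, $w=2z/(1+\frac\varepsilon4 r^2)$, $r^2=x^2+y^2+z^2$, $\varepsilon\in\{0,\pm1\}$; functions of $t$ regarded as functions of $R$ (prime $=d/dR$, $\dot R\neq0$). $u=\alpha^{-1}\partial_t$ (as a 1-form $u=-\alpha\,dt$), $\sigma$ its shear, $\mathbf a$ its acceleration, $\theta=3\dot R/R$ its expansion; $a_R,\Theta_0,R_0$ are constants. *)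

theory Defs
  imports "HOL-Analysis.Analysis"
begin

text \<open>Spacetime points: coordinates (t,x,y,z) = (p$0, p$1, p$2, p$3).\<close>
type_synonym pt = "real^4"

definition pd :: "4 \<Rightarrow> (pt \<Rightarrow> real) \<Rightarrow> pt \<Rightarrow> real" where
  "pd i f p = deriv (\<lambda>s. f (\<chi> j. if j = i then s else p $ j)) (p $ i)"

definition christoffel ::
  "(pt \<Rightarrow> 4 \<Rightarrow> 4 \<Rightarrow> real) \<Rightarrow> (pt \<Rightarrow> 4 \<Rightarrow> 4 \<Rightarrow> real) \<Rightarrow> pt \<Rightarrow> 4 \<Rightarrow> 4 \<Rightarrow> 4 \<Rightarrow> real" where
  "christoffel g gi p l m n = (1/2) * (\<Sum>k\<in>UNIV. gi p l k *
      (pd m (\<lambda>q. g q k n) p + pd n (\<lambda>q. g q k m) p - pd k (\<lambda>q. g q m n) p))"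

definition cov_covec ::
  "(pt \<Rightarrow> 4 \<Rightarrow> 4 \<Rightarrow> real) \<Rightarrow> (pt \<Rightarrow> 4 \<Rightarrow> 4 \<Rightarrow> real) \<Rightarrow> (pt \<Rightarrow> 4 \<Rightarrow> real) \<Rightarrow> pt \<Rightarrow> 4 \<Rightarrow> 4 \<Rightarrow> real" where
  "cov_covec g gi w p m n = pd m (\<lambda>q. w q n) p - (\<Sum>l\<in>UNIV. christoffel g gi p l m n * w p l)"

definition lower :: "(pt \<Rightarrow> 4 \<Rightarrow> 4 \<Rightarrow> real) \<Rightarrow> (pt \<Rightarrow> 4 \<Rightarrow> real) \<Rightarrow> pt \<Rightarrow> 4 \<Rightarrow> real" where
  "lower g v p n = (\<Sum>m\<in>UNIV. g p n m * v p m)"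

definition accel where
  "accel g gi u p n = (\<Sum>m\<in>UNIV. u p m * cov_covec g gi (lower g u) p m n)"

definition expansion where
  "expansion g gi u p = (\<Sum>m\<in>UNIV. \<Sum>n\<in>UNIV. gi p m n * cov_covec g gi (lower g u) p m n)"

definition shear where
  "shear g gi u p m n =
     (cov_covec g gi (lower g u) p m n + cov_covec g gi (lower g u) p n m) / 2
     + (accel g gi u p m * lower g u p n + accel g gi u p n * lower g u p m) / 2
     - expansion g gi u p / 3 * (g p m n + lower g u p m * lower g u p n)"

definition closed_on :: "pt set \<Rightarrow> (pt \<Rightarrow> 4 \<Rightarrow> real) \<Rightarrow> bool" where
  "closed_on U w \<longleftrightarrow> (\<forall>p\<in>U. \<forall>m n. pd m (\<lambda>q. w q n) p = pd n (\<lambda>q. w q m) p)"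

definition div2 where
  "div2 g gi T p n = (\<Sum>m\<in>UNIV. pd m (\<lambda>q. T q m n) p
      + (\<Sum>l\<in>UNIV. christoffel g gi p m m l * T p l n)
      + (\<Sum>l\<in>UNIV. christoffel g gi p n m l * T p m l))"

definition rsq :: "pt \<Rightarrow> real" where
  "rsq p = (p$1)^2 + (p$2)^2 + (p$3)^2"

definition st_w :: "real \<Rightarrow> pt \<Rightarrow> real" where
  "st_w \<epsilon> p = 2 * p$3 / (1 + \<epsilon> / 4 * rsq p)"

definition st_L :: "(real \<Rightarrow> real) \<Rightarrow> (real \<Rightarrow> real) \<Rightarrow> real \<Rightarrow> pt \<Rightarrow> real" where
  "st_L R B \<epsilon> p = R (p$0) / (1 + B (R (p$0)) * st_w \<epsilon> p)"

text \<open>Omega = w/(2z) L, written as L/(1 + eps r^2/4) (same for z /= 0, continuous at z = 0).\<close>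
definition st_Omega :: "(real \<Rightarrow> real) \<Rightarrow> (real \<Rightarrow> real) \<Rightarrow> real \<Rightarrow> pt \<Rightarrow> real" where
  "st_Omega R B \<epsilon> p = st_L R B \<epsilon> p / (1 + \<epsilon> / 4 * rsq p)"

definition st_alpha :: "(real \<Rightarrow> real) \<Rightarrow> (real \<Rightarrow> real) \<Rightarrow> real \<Rightarrow> pt \<Rightarrow> real" where
  "st_alpha R B \<epsilon> p =
     (1 + (B (R (p$0)) - R (p$0) * deriv B (R (p$0))) * st_w \<epsilon> p) / (1 + B (R (p$0)) * st_w \<epsilon> p)"

definition st_g :: "(real \<Rightarrow> real) \<Rightarrow> (real \<Rightarrow> real) \<Rightarrow> real \<Rightarrow> pt \<Rightarrow> 4 \<Rightarrow> 4 \<Rightarrow> real" where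
  "st_g R B \<epsilon> p i j = (if i \<noteq> j then 0 else if i = 0 then - ((st_alpha R B \<epsilon> p)^2)
                        else (st_Omega R B \<epsilon> p)^2)"

definition st_gi :: "(real \<Rightarrow> real) \<Rightarrow> (real \<Rightarrow> real) \<Rightarrow> real \<Rightarrow> pt \<Rightarrow> 4 \<Rightarrow> 4 \<Rightarrow> real" where
  "st_gi R B \<epsilon> p i j = (if i \<noteq> j then 0 else if i = 0 then - (1 / (st_alpha R B \<epsilon> p)^2)
                        else 1 / (st_Omega R B \<epsilon> p)^2)"

definition st_u :: "(real \<Rightarrow> real) \<Rightarrow> (real \<Rightarrow> real) \<Rightarrow> real \<Rightarrow> pt \<Rightarrow> 4 \<Rightarrow> real" where
  "st_u R B \<epsilon> p i = (if i = 0 then 1 / st_alpha R B \<epsilon> p else 0)"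

definition st_shear where
  "st_shear R B \<epsilon> = shear (st_g R B \<epsilon>) (st_gi R B \<epsilon>) (st_u R B \<epsilon>)"

definition st_omega :: "(real \<Rightarrow> real) \<Rightarrow> (real \<Rightarrow> real) \<Rightarrow> real \<Rightarrow> pt \<Rightarrow> 4 \<Rightarrow> real" where
  "st_omega R B \<epsilon> p n =
     accel (st_g R B \<epsilon>) (st_gi R B \<epsilon>) (st_u R B \<epsilon>) p n
     - expansion (st_g R B \<epsilon>) (st_gi R B \<epsilon>) (st_u R B \<epsilon>) p / 3
       * lower (st_g R B \<epsilon>) (st_u R B \<epsilon>) p n"

definition st_fluidT where
  "st_fluidT R B \<epsilon> rho P q i j =
     (rho q + P q) * st_u R B \<epsilon> q i * st_u R B \<epsilon> q j + P q * st_gi R B \<epsilon> q i j"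

end

theory Submission
  imports Defs
begin

lemma four_eq: "(4::4) = 0" by simp
lemma sum4: "sum f (UNIV::4 set) = f 0 + f 1 + f 2 + f 3"
  by (simp add: sum_4 four_eq algebra_simps)
lemma ex4: "(x::4) = 0 \<or> x = 1 \<or> x = 2 \<or> x = 3" using exhaust_4[of x] four_eq by metis

definition grad_at :: "(pt \<Rightarrow> real) \<Rightarrow> (4 \<Rightarrow> real) \<Rightarrow> pt \<Rightarrow> bool" where
  "grad_at f G p \<longleftrightarrow> (f has_derivative (\<lambda>h. \<Sum>k\<in>UNIV. G k * h$k)) (at p)"

lemma grad_cong: "grad_at f G p \<Longrightarrow> (\<And>k. G k = H k) \<Longrightarrow> grad_at f H p"
  by (simp add: grad_at_def)

lemma pd_grad: assumes "grad_at f G p" shows "pd i f p = G i"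
proof -
  let ?l = "\<lambda>s. (\<chi> j. if j = i then s else p $ j) :: pt"
  have l: "?l s = p + (s - p$i) *\<^sub>R axis i 1" for s
    by (simp add: vec_eq_iff axis_def)
  have hl: "(?l has_derivative (\<lambda>h. h *\<^sub>R axis i 1)) (at (p$i))"
    unfolding l by (auto intro!: derivative_eq_intros)
  have lp: "?l (p$i) = p" by (simp add: vec_eq_iff)
  have hf: "(f has_derivative (\<lambda>h. \<Sum>k\<in>UNIV. G k * h$k)) (at (?l (p$i)))"
    using assms lp by (simp add: grad_at_def)
  have "((\<lambda>s. f (?l s)) has_derivative (\<lambda>h. \<Sum>k\<in>UNIV. G k * (h *\<^sub>R axis i 1)$k)) (at (p$i))"
    using has_derivative_compose[OF hl hf] by simp
  moreover have "(\<lambda>h. \<Sum>k\<in>UNIV. G k * (h *\<^sub>R axis i (1::real))$k) = (\<lambda>h. G i * h)"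
    by (auto simp: axis_def if_distrib cong: if_cong)
  ultimately have "((\<lambda>s. f (?l s)) has_real_derivative G i) (at (p$i))"
    by (simp add: has_field_derivative_def)
  then show ?thesis unfolding pd_def by (rule DERIV_imp_deriv)
qed

lemma grad_const[intro]: "grad_at (\<lambda>q. c) (\<lambda>k. 0) p"
  by (simp add: grad_at_def)

lemma grad_coord[intro]: "grad_at (\<lambda>q. q$j) (\<lambda>k. if k = j then 1 else 0) p"
proof -
  have e: "(if k = j then 1 else 0) * x = (if k = j then x else (0::real))" for k x by simp
  have "(\<lambda>h::pt. \<Sum>k\<in>UNIV. (if k = j then 1 else 0) * h$k) = (\<lambda>h. h$j)"
    by (simp only: e sum.delta') simp
  then show ?thesis unfolding grad_at_def
    using bounded_linear_vec_nth[of j] bounded_linear_imp_has_derivative by metis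
qed

lemma grad_add[intro]: "grad_at f F p \<Longrightarrow> grad_at g G p \<Longrightarrow> grad_at (\<lambda>q. f q + g q) (\<lambda>k. F k + G k) p"
  unfolding grad_at_def
  by (drule (1) has_derivative_add) (simp add: algebra_simps sum.distrib)

lemma grad_diff[intro]: "grad_at f F p \<Longrightarrow> grad_at g G p \<Longrightarrow> grad_at (\<lambda>q. f q - g q) (\<lambda>k. F k - G k) p"
  unfolding grad_at_def
  by (drule (1) has_derivative_diff) (simp add: algebra_simps sum_subtractf)

lemma grad_minus[intro]: "grad_at f F p \<Longrightarrow> grad_at (\<lambda>q. - f q) (\<lambda>k. - F k) p"
  unfolding grad_at_def
  by (drule has_derivative_minus) (simp add: sum_negf)

lemma grad_mult[intro]: "grad_at f F p \<Longrightarrow> grad_at g G p \<Longrightarrow>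
   grad_at (\<lambda>q. f q * g q) (\<lambda>k. f p * G k + F k * g p) p"
  unfolding grad_at_def
  by (drule (1) has_derivative_mult) (simp add: algebra_simps sum.distrib sum_distrib_left)

lemma grad_comp: "(H has_real_derivative D) (at (f p)) \<Longrightarrow> grad_at f F p \<Longrightarrow>
   grad_at (\<lambda>q. H (f q)) (\<lambda>k. D * F k) p"
  unfolding grad_at_def has_field_derivative_def
  by (drule (1) has_derivative_compose[of f _ p UNIV H]) (simp add: algebra_simps sum_distrib_left)

lemma grad_inverse[intro]: "grad_at f F p \<Longrightarrow> f p \<noteq> 0 \<Longrightarrow>
   grad_at (\<lambda>q. inverse (f q)) (\<lambda>k. - F k / (f p)^2) p"
  apply (drule grad_comp[rotated, where H=inverse and D="- inverse ((f p)^2)"])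
   apply (auto intro!: derivative_eq_intros simp: power2_eq_square)[1]
  apply (erule grad_cong) apply (simp add: field_simps)
  done

lemma grad_divide[intro]: "grad_at f F p \<Longrightarrow> grad_at g G p \<Longrightarrow> g p \<noteq> 0 \<Longrightarrow>
   grad_at (\<lambda>q. f q / g q) (\<lambda>k. (F k * g p - f p * G k) / (g p)^2) p"
proof -
  assume a: "grad_at f F p" "grad_at g G p" "g p \<noteq> 0"
  from grad_mult[OF a(1) grad_inverse[OF a(2,3)]] show ?thesis
    apply (simp add: divide_inverse[symmetric])
    apply (erule grad_cong) using a(3) by (simp add: field_simps power2_eq_square)
qed

lemma grad_power[intro]: "grad_at f F p \<Longrightarrow> grad_at (\<lambda>q. (f q)^n) (\<lambda>k. real n * (f p)^(n-1) * F k) p"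
  apply (drule grad_comp[rotated, where H="\<lambda>x. x^n" and D="real n * (f p)^(n-1)"])
   apply (auto intro!: derivative_eq_intros)[1]
  apply (erule grad_cong) apply (simp add: field_simps)
  done

lemma grad_ln[intro]: "grad_at f F p \<Longrightarrow> f p > 0 \<Longrightarrow> grad_at (\<lambda>q. ln (f q)) (\<lambda>k. F k / f p) p"
  apply (drule grad_comp[rotated, where H="ln" and D="1 / f p"])
   apply (auto intro!: derivative_eq_intros)[1]
  apply (erule grad_cong) apply (simp add: field_simps)
  done

lemma pd_local:
  assumes "open U" "p \<in> U" "\<And>q. q \<in> U \<Longrightarrow> f q = g q"
  shows "pd i f p = pd i g p"
proof -
  let ?l = "\<lambda>s. (\<chi> j. if j = i then s else p $ j) :: pt"
  have l: "?l = (\<lambda>s. p + (s - p$i) *\<^sub>R axis i 1)"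
    by (simp add: vec_eq_iff axis_def fun_eq_iff)
  have c: "continuous_on UNIV ?l" unfolding l by (intro continuous_intros)
  have o: "open (?l -` U)" using open_vimage[OF assms(1) c] .
  have "?l (p$i) = p" by (simp add: vec_eq_iff)
  with assms(2) have "p$i \<in> ?l -` U" by simp
  then have "eventually (\<lambda>s. ?l s \<in> U) (nhds (p$i))"
    using o eventually_nhds by blast
  then have "eventually (\<lambda>s. f (?l s) = g (?l s)) (nhds (p$i))"
    by (rule eventually_mono) (simp add: assms(3))
  then show ?thesis unfolding pd_def by (rule deriv_cong_ev) simp
qed

lemma sum_diag: "(\<And>k. k \<noteq> l \<Longrightarrow> a k = (0::real)) \<Longrightarrow> (\<Sum>k\<in>(UNIV::4 set). a k * X k) = a l * X l"
proof -
  assume h: "\<And>k. k \<noteq> l \<Longrightarrow> a k = 0"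
  have "(\<Sum>k\<in>(UNIV::4 set). a k * X k) = a l * X l + (\<Sum>k\<in>UNIV - {l}. a k * X k)"
    by (rule sum.remove) auto
  also have "(\<Sum>k\<in>UNIV - {l}. a k * X k) = 0" by (rule sum.neutral) (simp add: h)
  finally show ?thesis by simp
qed

definition dg :: "(pt \<Rightarrow> real) \<Rightarrow> (pt \<Rightarrow> real) \<Rightarrow> pt \<Rightarrow> 4 \<Rightarrow> 4 \<Rightarrow> real" where
  "dg A W p i j = (if i \<noteq> j then 0 else if i = 0 then - ((A p)^2) else (W p)^2)"
definition dgi :: "(pt \<Rightarrow> real) \<Rightarrow> (pt \<Rightarrow> real) \<Rightarrow> pt \<Rightarrow> 4 \<Rightarrow> 4 \<Rightarrow> real" where
  "dgi A W p i j = (if i \<noteq> j then 0 else if i = 0 then - (1 / (A p)^2) else 1 / (W p)^2)"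
definition uu :: "(pt \<Rightarrow> real) \<Rightarrow> pt \<Rightarrow> 4 \<Rightarrow> real" where
  "uu A p i = (if i = 0 then 1 / A p else 0)"

definition pdg where
  "pdg A W GA GW p k i j = (if i \<noteq> j then 0 else if i = 0 then -2 * A p * GA k else 2 * W p * GW k)"

lemma pd_dg:
  assumes "grad_at A GA p" "grad_at W GW p"
  shows "pd k (\<lambda>q. dg A W q i j) p = pdg A W GA GW p k i j"
proof (cases "i = j")
  case False then show ?thesis by (simp add: dg_def pdg_def pd_grad[OF grad_const])
next
  case True
  show ?thesis
  proof (cases "i = 0")
    case True
    have "grad_at (\<lambda>q. - ((A q)^2)) (\<lambda>k. -2 * A p * GA k) p"
      using grad_minus[OF grad_power[OF assms(1), of 2]] by (rule grad_cong) simp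
    then show ?thesis using \<open>i = j\<close> True by (simp add: dg_def pdg_def pd_grad)
  next
    case False
    have "grad_at (\<lambda>q. ((W q)^2)) (\<lambda>k. 2 * W p * GW k) p"
      using grad_power[OF assms(2), of 2] by (rule grad_cong) simp
    then show ?thesis using \<open>i = j\<close> False by (simp add: dg_def pdg_def pd_grad)
  qed
qed

lemma chr_dg:
  assumes "grad_at A GA p" "grad_at W GW p"
  shows "christoffel (dg A W) (dgi A W) p l m n =
     (1/2) * dgi A W p l l * (pdg A W GA GW p m l n + pdg A W GA GW p n l m - pdg A W GA GW p l m n)"
proof -
  show ?thesis unfolding christoffel_def pd_dg[OF assms]
    by (subst sum_diag[where l=l]) (auto simp: dgi_def)
qed

lemma lower_dg: "lower (dg A W) (uu A) q n = (if n = 0 then - A q else 0)"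
  unfolding lower_def by (simp add: sum4 dg_def uu_def power2_eq_square)

lemma cov_dg:
  assumes "grad_at A GA p" "grad_at W GW p" "A p \<noteq> 0" "W p \<noteq> 0"
  shows "cov_covec (dg A W) (dgi A W) (lower (dg A W) (uu A)) p m n =
    (if n = 0 then 0 else if m = 0 then GA n else if m = n then W p * GW 0 / A p else 0)"
proof -
  have pl: "pd m (\<lambda>q. lower (dg A W) (uu A) q n) p = (if n = 0 then - GA m else 0)"
  proof (cases "n = 0")
    case True
    have "grad_at (\<lambda>q. - A q) (\<lambda>k. - GA k) p" by (intro grad_minus assms)
    then show ?thesis using True by (simp add: lower_dg pd_grad)
  qed (simp add: lower_dg pd_grad[OF grad_const])
  have e: "christoffel (dg A W) (dgi A W) p l m n * lower (dg A W) (uu A) p l =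
     (if l = 0 then christoffel (dg A W) (dgi A W) p 0 m n * (- A p) else 0)" for l
    by (simp add: lower_dg)
  have s: "(\<Sum>l\<in>UNIV. christoffel (dg A W) (dgi A W) p l m n * lower (dg A W) (uu A) p l)
     = christoffel (dg A W) (dgi A W) p 0 m n * (- A p)"
    by (simp only: e sum.delta') simp
  have c0: "christoffel (dg A W) (dgi A W) p 0 m n = (1/2) * (- 1 / (A p)^2) *
     (pdg A W GA GW p m 0 n + pdg A W GA GW p n 0 m - pdg A W GA GW p 0 m n)"
    unfolding chr_dg[OF assms(1,2)] by (simp add: dgi_def)
  show ?thesis
    unfolding cov_covec_def pl s c0 pdg_def
    using assms(3,4)
    by (auto simp: field_simps power2_eq_square)
qed

lemma accel_dg:
  assumes "grad_at A GA p" "grad_at W GW p" "A p \<noteq> 0" "W p \<noteq> 0"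
  shows "accel (dg A W) (dgi A W) (uu A) p n = (if n = 0 then 0 else GA n / A p)"
  unfolding accel_def cov_dg[OF assms] using assms(3)
  by (simp add: sum4 uu_def)

lemma expansion_dg:
  assumes "grad_at A GA p" "grad_at W GW p" "A p \<noteq> 0" "W p \<noteq> 0"
  shows "expansion (dg A W) (dgi A W) (uu A) p = 3 * GW 0 / (W p * A p)"
  unfolding expansion_def cov_dg[OF assms] using assms(3,4)
  by (simp add: sum4 dgi_def field_simps power2_eq_square)

lemma shear_dg:
  assumes "grad_at A GA p" "grad_at W GW p" "A p \<noteq> 0" "W p \<noteq> 0"
  shows "shear (dg A W) (dgi A W) (uu A) p m n = 0"
  unfolding shear_def cov_dg[OF assms] accel_dg[OF assms] expansion_dg[OF assms] lower_dg
  using assms(3,4)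
  by (auto simp: dg_def field_simps power2_eq_square)

lemma omega_dg:
  assumes "grad_at A GA p" "grad_at W GW p" "A p \<noteq> 0" "W p \<noteq> 0"
  shows "accel (dg A W) (dgi A W) (uu A) p n - expansion (dg A W) (dgi A W) (uu A) p / 3
       * lower (dg A W) (uu A) p n = (if n = 0 then GW 0 / W p else GA n / A p)"
  unfolding accel_dg[OF assms] expansion_dg[OF assms] lower_dg
  using assms(3,4) by (auto simp: field_simps)

definition fT where
  "fT A W rho P q i j = (rho q + P q) * uu A q i * uu A q j + P q * dgi A W q i j"

lemma fT_eq: "fT A W rho P q i j = (if i \<noteq> j then 0 else if i = 0 then rho q / (A q)^2 else P q / (W q)^2)"
  by (simp add: fT_def uu_def dgi_def field_simps power2_eq_square)

lemma pd_fT: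
  assumes "grad_at A GA p" "grad_at W GW p" "A p \<noteq> 0" "W p \<noteq> 0"
    "grad_at rho Grho p" "grad_at P GP p"
  shows "pd m (\<lambda>q. fT A W rho P q i j) p = (if i \<noteq> j then 0 else if i = 0 then
     (Grho m * (A p)^2 - rho p * (2 * A p * GA m)) / ((A p)^2)^2
     else (GP m * (W p)^2 - P p * (2 * W p * GW m)) / ((W p)^2)^2)"
proof -
  have a: "grad_at (\<lambda>q. rho q / (A q)^2) (\<lambda>k. (Grho k * (A p)^2 - rho p * (2 * A p * GA k)) / ((A p)^2)^2) p"
    using grad_divide[OF assms(5) grad_power[OF assms(1), of 2]] assms(3) by (rule_tac grad_cong) auto
  have w: "grad_at (\<lambda>q. P q / (W q)^2) (\<lambda>k. (GP k * (W p)^2 - P p * (2 * W p * GW k)) / ((W p)^2)^2) p"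
    using grad_divide[OF assms(6) grad_power[OF assms(2), of 2]] assms(4) by (rule_tac grad_cong) auto
  show ?thesis unfolding fT_eq
    by (auto simp: pd_grad[OF a] pd_grad[OF w] pd_grad[OF grad_const])
qed

lemma div_fT:
  assumes "grad_at A GA p" "grad_at W GW p" "A p \<noteq> 0" "W p \<noteq> 0"
    "grad_at rho Grho p" "grad_at P GP p"
  shows "div2 (dg A W) (dgi A W) (fT A W rho P) p n =
    (if n = 0 then (Grho 0 + 3 * (GW 0 / W p) * (rho p + P p)) / (A p)^2
     else (GP n + (GA n / A p) * (rho p + P p)) / (W p)^2)"
  using ex4[of n] assms(3,4)
  unfolding div2_def pd_fT[OF assms] chr_dg[OF assms(1,2)] 
  by (auto simp: sum4 fT_eq pdg_def dgi_def field_simps power2_eq_square)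



definition Dd :: "real \<Rightarrow> pt \<Rightarrow> real" where "Dd \<epsilon> q = 1 + \<epsilon> / 4 * rsq q"
definition wg :: "real \<Rightarrow> pt \<Rightarrow> 4 \<Rightarrow> real" where
  "wg \<epsilon> q k = (if k = 0 then 0 else (2 * (if k = 3 then 1 else 0) * Dd \<epsilon> q - \<epsilon> * q$3 * q$k) / (Dd \<epsilon> q)^2)"

lemma wg0[simp]: "wg \<epsilon> q 0 = 0" by (simp add: wg_def)

lemma grad_rsq: "grad_at rsq (\<lambda>k. if k = 0 then 0 else 2 * q$k) q"
  unfolding rsq_def
  apply (rule grad_cong)
   apply (rule grad_add grad_power grad_coord)+
  using ex4 by (auto)

lemma grad_Dd: "grad_at (Dd \<epsilon>) (\<lambda>k. if k = 0 then 0 else \<epsilon> / 2 * q$k) q"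
  unfolding Dd_def[abs_def]
  apply (rule grad_cong)
   apply (rule grad_add grad_mult grad_const grad_rsq)+
  using ex4 by (auto)

lemma grad_w: assumes "Dd \<epsilon> q \<noteq> 0" shows "grad_at (st_w \<epsilon>) (wg \<epsilon> q) q"
proof -
  have e: "st_w \<epsilon> = (\<lambda>q. (2 * q$3) / Dd \<epsilon> q)" by (simp add: st_w_def[abs_def] Dd_def[abs_def])
  show ?thesis unfolding e
    apply (rule grad_cong)
     apply (rule grad_divide assms grad_mult grad_const grad_coord grad_Dd)+
    unfolding wg_def using ex4 by (auto simp: field_simps)
qed

definition aw :: "(real \<Rightarrow> real) \<Rightarrow> (real \<Rightarrow> real) \<Rightarrow> real \<Rightarrow> pt \<Rightarrow> real" where
  "aw R B \<epsilon> q = - R (q$0) * deriv B (R (q$0)) / (1 + B (R (q$0)) * st_w \<epsilon> q)^2"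

definition e0 :: "4 \<Rightarrow> real" where "e0 k = (if k = 0 then 1 else 0)"

lemma grad_t: "grad_at (\<lambda>q. q$0) e0 q" unfolding e0_def by (rule grad_coord)

lemma grad_tf: "(H has_real_derivative D) (at (q$0)) \<Longrightarrow> grad_at (\<lambda>q. H (q$0)) (\<lambda>k. D * e0 k) q"
  by (rule grad_comp[OF _ grad_t])

lemma grad_tff: "(H has_real_derivative D) (at (R (q$0))) \<Longrightarrow> (R has_real_derivative R1) (at (q$0))
  \<Longrightarrow> grad_at (\<lambda>q. H (R (q$0))) (\<lambda>k. D * (R1 * e0 k)) q"
  by (rule grad_comp[OF _ grad_tf]) auto

lemma grad_alpha:
  assumes hR: "(R has_real_derivative R1) (at (q$0))"
    and hB: "(B has_real_derivative deriv B (R (q$0))) (at (R (q$0)))"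
    and hB1: "(deriv B has_real_derivative b2) (at (R (q$0)))"
    and D: "Dd \<epsilon> q \<noteq> 0" and nb: "1 + B (R (q$0)) * st_w \<epsilon> q \<noteq> 0"
  shows "grad_at (st_alpha R B \<epsilon>) (\<lambda>k. if k = 0 then
     (let Rv = R (q$0); b = B Rv; b1 = deriv B Rv; c = b - Rv * b1; w = st_w \<epsilon> q in
       ((-(Rv*R1*b2))*w*(1+b*w) - b1*R1*w*(1+c*w))/(1+b*w)^2)
     else aw R B \<epsilon> q * wg \<epsilon> q k) q"
proof -
  have e: "st_alpha R B \<epsilon> = (\<lambda>q. (1 + (B (R (q$0)) - R (q$0) * deriv B (R (q$0))) * st_w \<epsilon> q) / (1 + B (R (q$0)) * st_w \<epsilon> q))"
    by (simp add: st_alpha_def[abs_def])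
  have gw: "grad_at (st_w \<epsilon>) (wg \<epsilon> q) q" by (rule grad_w[OF D])
  show ?thesis unfolding e
    apply (rule grad_cong)
     apply (rule grad_divide grad_add grad_diff grad_mult grad_const grad_tff[OF hB hR] grad_tff[OF hB1 hR] grad_tf[OF hR] gw nb)+
    using nb by (auto simp: wg_def e0_def aw_def Let_def field_simps power2_eq_square)
qed

lemma grad_Omega:
  assumes hR: "(R has_real_derivative R1) (at (q$0))"
    and hB: "(B has_real_derivative deriv B (R (q$0))) (at (R (q$0)))"
    and D: "Dd \<epsilon> q \<noteq> 0" and nb: "1 + B (R (q$0)) * st_w \<epsilon> q \<noteq> 0" and Rn: "R (q$0) \<noteq> 0"
  shows "\<exists>GW. grad_at (st_Omega R B \<epsilon>) GW q \<and> GW 0 = R1 * st_alpha R B \<epsilon> q * st_Omega R B \<epsilon> q / R (q$0)"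
proof -
  have e: "st_Omega R B \<epsilon> = (\<lambda>q. (R (q$0) / (1 + B (R (q$0)) * st_w \<epsilon> q)) / Dd \<epsilon> q)"
    by (simp add: st_Omega_def[abs_def] st_L_def[abs_def] Dd_def)
  have gw: "grad_at (st_w \<epsilon>) (wg \<epsilon> q) q" by (rule grad_w[OF D])
  show ?thesis unfolding e
    apply (rule exI, rule conjI)
     apply (rule grad_divide grad_add grad_mult grad_const grad_tff[OF hB hR] grad_tf[OF hR] gw nb D grad_Dd)+
    using nb D Rn by (simp add: wg_def e0_def st_alpha_def divide_simps) (simp add: algebra_simps power2_eq_square)
qed

definition wgg :: "real \<Rightarrow> pt \<Rightarrow> 4 \<Rightarrow> 4 \<Rightarrow> real" where
  "wgg \<epsilon> q i k = (if k = 0 then 0 else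
     (- \<epsilon> * Dd \<epsilon> q * ((if i = 3 then 1 else 0) * q$k + (if k = 3 then 1 else 0) * q$i)
      - \<epsilon> * q$3 * (if i = k then 1 else 0) * Dd \<epsilon> q + \<epsilon>^2 * q$3 * q$i * q$k) / (Dd \<epsilon> q)^3)"

lemma wgg0[simp]: "wgg \<epsilon> q i 0 = 0" by (simp add: wgg_def)

lemma grad_wg: assumes D: "Dd \<epsilon> q \<noteq> 0" and i: "i \<noteq> 0"
  shows "grad_at (\<lambda>q. wg \<epsilon> q i) (wgg \<epsilon> q i) q"
proof -
  have e: "(\<lambda>q. wg \<epsilon> q i) = (\<lambda>q. (2 * (if i = 3 then 1 else 0) * Dd \<epsilon> q - \<epsilon> * q$3 * q$i) / (Dd \<epsilon> q)^2)"
    using i by (simp add: wg_def)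
  show ?thesis unfolding e
    apply (rule grad_cong)
     apply (rule grad_divide grad_diff grad_mult grad_const grad_coord grad_Dd grad_power)+
      apply (simp add: D)
    using D i by (auto simp: wgg_def field_simps power2_eq_square power3_eq_cube)
qed

lemma wgg_sym: "i \<noteq> 0 \<Longrightarrow> k \<noteq> 0 \<Longrightarrow> wgg \<epsilon> q i k = wgg \<epsilon> q k i"
  by (simp add: wgg_def algebra_simps)

definition omx :: "(real \<Rightarrow> real) \<Rightarrow> (real \<Rightarrow> real) \<Rightarrow> real \<Rightarrow> pt \<Rightarrow> 4 \<Rightarrow> real" where
  "omx R B \<epsilon> q n = (if n = 0 then deriv R (q$0) * (1 + (B (R (q$0)) - R (q$0) * deriv B (R (q$0))) * st_w \<epsilon> q)
         / (R (q$0) * (1 + B (R (q$0)) * st_w \<epsilon> q))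
     else - R (q$0) * deriv B (R (q$0)) / ((1 + B (R (q$0)) * st_w \<epsilon> q) * (1 + (B (R (q$0)) - R (q$0) * deriv B (R (q$0))) * st_w \<epsilon> q)) * wg \<epsilon> q n)"

definition OMG :: "(real \<Rightarrow> real) \<Rightarrow> (real \<Rightarrow> real) \<Rightarrow> real \<Rightarrow> pt \<Rightarrow> 4 \<Rightarrow> 4 \<Rightarrow> real" where
  "OMG R B \<epsilon> q i k = (let Rv = R (q$0); R1 = deriv R (q$0); b = B Rv; b1 = deriv B Rv;
     b2 = deriv (deriv B) Rv; c = b - Rv * b1; w = st_w \<epsilon> q;
     psi = -Rv*b1/((1+b*w)*(1+c*w));
     psiw = Rv*b1*(b*(1+c*w) + c*(1+b*w))/((1+b*w)^2*(1+c*w)^2);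
     psit = -(R1*b1 + Rv*b2*R1)/((1+b*w)*(1+c*w))
        + Rv*b1*(b1*R1*w*(1+c*w) + (-Rv*R1*b2)*w*(1+b*w))/((1+b*w)^2*(1+c*w)^2)
    in if k = 0 then psit * wg \<epsilon> q i else psiw * wg \<epsilon> q k * wg \<epsilon> q i + psi * wgg \<epsilon> q i k)"

lemma grad_omx_sp:
  assumes hR: "(R has_real_derivative deriv R (q$0)) (at (q$0))"
    and hB: "(B has_real_derivative deriv B (R (q$0))) (at (R (q$0)))"
    and hB1: "(deriv B has_real_derivative deriv (deriv B) (R (q$0))) (at (R (q$0)))"
    and D: "Dd \<epsilon> q \<noteq> 0" and nb: "1 + B (R (q$0)) * st_w \<epsilon> q \<noteq> 0"
    and nc: "1 + (B (R (q$0)) - R (q$0) * deriv B (R (q$0))) * st_w \<epsilon> q \<noteq> 0" and i: "i \<noteq> 0"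
  shows "grad_at (\<lambda>q. omx R B \<epsilon> q i) (OMG R B \<epsilon> q i) q"
proof -
  have e: "(\<lambda>q. omx R B \<epsilon> q i) = (\<lambda>q. - R (q$0) * deriv B (R (q$0)) / ((1 + B (R (q$0)) * st_w \<epsilon> q) * (1 + (B (R (q$0)) - R (q$0) * deriv B (R (q$0))) * st_w \<epsilon> q)) * wg \<epsilon> q i)"
    using i by (simp add: omx_def)
  have nbc: "(1 + B (R (q$0)) * st_w \<epsilon> q) * (1 + (B (R (q$0)) - R (q$0) * deriv B (R (q$0))) * st_w \<epsilon> q) \<noteq> 0"
    using nb nc by simp
  define X where "X = 1 + B (R (q$0)) * st_w \<epsilon> q"
  define Y where "Y = 1 + (B (R (q$0)) - R (q$0) * deriv B (R (q$0))) * st_w \<epsilon> q"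
  have X: "X \<noteq> 0" and Y: "Y \<noteq> 0" using nb nc by (simp_all add: X_def Y_def)
  show ?thesis unfolding e
    apply (rule grad_cong)
     apply (rule grad_divide grad_mult grad_minus grad_add grad_diff grad_const grad_tff[OF hB hR] grad_tff[OF hB1 hR] grad_tf[OF hR] grad_w[OF D] grad_wg[OF D i] nbc)+
    subgoal for k
      apply (cases "k = 0")
      subgoal
       apply (simp add: OMG_def Let_def e0_def)
       apply (unfold X_def[symmetric] Y_def[symmetric])
       apply (simp add: field_simps power2_eq_square X Y)
       apply (simp add: X_def Y_def algebra_simps)?
       done
      subgoal
      apply (simp add: OMG_def Let_def)
      apply (unfold X_def[symmetric] Y_def[symmetric])
      apply (simp add: e0_def field_simps power2_eq_square X Y)
      apply (simp add: X_def Y_def algebra_simps)?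
      done
    done
  done
qed

lemma grad_omx_0:
  assumes hR: "(R has_real_derivative deriv R (q$0)) (at (q$0))"
    and hR1: "(deriv R has_real_derivative R2) (at (q$0))"
    and hB: "(B has_real_derivative deriv B (R (q$0))) (at (R (q$0)))"
    and hB1: "(deriv B has_real_derivative deriv (deriv B) (R (q$0))) (at (R (q$0)))"
    and D: "Dd \<epsilon> q \<noteq> 0" and nb: "1 + B (R (q$0)) * st_w \<epsilon> q \<noteq> 0"
    and Rn: "R (q$0) \<noteq> 0"
  shows "\<exists>G. grad_at (\<lambda>q. omx R B \<epsilon> q 0) G q \<and> (\<forall>k. k \<noteq> 0 \<longrightarrow>
     G k = - deriv R (q$0) * deriv B (R (q$0)) * wg \<epsilon> q k / (1 + B (R (q$0)) * st_w \<epsilon> q)^2)"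
proof -
  have e: "(\<lambda>q. omx R B \<epsilon> q 0) = (\<lambda>q. deriv R (q$0) * (1 + (B (R (q$0)) - R (q$0) * deriv B (R (q$0))) * st_w \<epsilon> q)
         / (R (q$0) * (1 + B (R (q$0)) * st_w \<epsilon> q)))"
    by (simp add: omx_def)
  have nbc: "R (q$0) * (1 + B (R (q$0)) * st_w \<epsilon> q) \<noteq> 0" using nb Rn by simp
  define X where "X = 1 + B (R (q$0)) * st_w \<epsilon> q"
  have X: "X \<noteq> 0" using nb by (simp add: X_def)
  show ?thesis unfolding e
    apply (rule exI, rule conjI)
     apply (rule grad_divide grad_mult grad_minus grad_add grad_diff grad_const grad_tff[OF hB hR] grad_tff[OF hB1 hR] grad_tf[OF hR] grad_tf[OF hR1] grad_w[OF D] nbc)+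
    apply (intro allI impI)
    apply (simp add: e0_def)
    apply (unfold X_def[symmetric])
    apply (simp add: field_simps power2_eq_square X Rn)
    apply (simp add: X_def algebra_simps)?
    done
qed



definition good :: "(real \<Rightarrow> real) \<Rightarrow> (real \<Rightarrow> real) \<Rightarrow> real \<Rightarrow> pt \<Rightarrow> bool" where
  "good R B \<epsilon> q \<longleftrightarrow> (R has_real_derivative deriv R (q$0)) (at (q$0))
    \<and> (deriv R has_real_derivative deriv (deriv R) (q$0)) (at (q$0))
    \<and> (B has_real_derivative deriv B (R (q$0))) (at (R (q$0)))
    \<and> (deriv B has_real_derivative deriv (deriv B) (R (q$0))) (at (R (q$0)))
    \<and> Dd \<epsilon> q \<noteq> 0 \<and> 1 + B (R (q$0)) * st_w \<epsilon> q \<noteq> 0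
    \<and> 1 + (B (R (q$0)) - R (q$0) * deriv B (R (q$0))) * st_w \<epsilon> q \<noteq> 0
    \<and> R (q$0) > 0 \<and> deriv R (q$0) \<noteq> 0 \<and> st_alpha R B \<epsilon> q > 0"

definition GAf :: "(real \<Rightarrow> real) \<Rightarrow> (real \<Rightarrow> real) \<Rightarrow> real \<Rightarrow> pt \<Rightarrow> 4 \<Rightarrow> real" where
  "GAf R B \<epsilon> q = (\<lambda>k. if k = 0 then
     (let Rv = R (q$0); R1 = deriv R (q$0); b = B Rv; b1 = deriv B Rv; c = b - Rv * b1; w = st_w \<epsilon> q in
       ((-(Rv*R1*deriv (deriv B) Rv))*w*(1+b*w) - b1*R1*w*(1+c*w))/(1+b*w)^2)
     else aw R B \<epsilon> q * wg \<epsilon> q k)"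

lemma gA: "good R B \<epsilon> q \<Longrightarrow> grad_at (st_alpha R B \<epsilon>) (GAf R B \<epsilon> q) q"
  using grad_alpha[of R "deriv R (q$0)" q B "deriv (deriv B) (R (q$0))" \<epsilon>]
  unfolding good_def GAf_def Let_def by auto

lemma gW: "good R B \<epsilon> q \<Longrightarrow> \<exists>GW. grad_at (st_Omega R B \<epsilon>) GW q \<and>
    GW 0 = deriv R (q$0) * st_alpha R B \<epsilon> q * st_Omega R B \<epsilon> q / R (q$0)"
  unfolding good_def by (intro grad_Omega) auto

lemma Omega_nz: "good R B \<epsilon> q \<Longrightarrow> st_Omega R B \<epsilon> q \<noteq> 0"
  by (auto simp: good_def st_Omega_def st_L_def Dd_def)

lemma st_g_eq: "st_g R B \<epsilon> = dg (st_alpha R B \<epsilon>) (st_Omega R B \<epsilon>)"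
  by (intro ext) (simp add: st_g_def dg_def)
lemma st_gi_eq: "st_gi R B \<epsilon> = dgi (st_alpha R B \<epsilon>) (st_Omega R B \<epsilon>)"
  by (intro ext) (simp add: st_gi_def dgi_def)
lemma st_u_eq: "st_u R B \<epsilon> = uu (st_alpha R B \<epsilon>)"
  by (intro ext) (simp add: st_u_def uu_def)

lemma L_shear: "good R B \<epsilon> q \<Longrightarrow> st_shear R B \<epsilon> q m n = 0"
proof -
  assume g: "good R B \<epsilon> q"
  obtain GW where W: "grad_at (st_Omega R B \<epsilon>) GW q" using gW[OF g] by blast
  have a: "st_alpha R B \<epsilon> q \<noteq> 0" using g by (simp add: good_def)
  show ?thesis unfolding st_shear_def st_g_eq st_gi_eq st_u_eq
    by (rule shear_dg[OF gA[OF g] W a Omega_nz[OF g]])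
qed

lemma L_om: "good R B \<epsilon> q \<Longrightarrow> st_omega R B \<epsilon> q n = omx R B \<epsilon> q n"
proof -
  assume g: "good R B \<epsilon> q"
  obtain GW where W: "grad_at (st_Omega R B \<epsilon>) GW q" and W0: "GW 0 = deriv R (q$0) * st_alpha R B \<epsilon> q * st_Omega R B \<epsilon> q / R (q$0)"
    using gW[OF g] by blast
  have a: "st_alpha R B \<epsilon> q \<noteq> 0" using g by (simp add: good_def)
  have "st_omega R B \<epsilon> q n = (if n = 0 then GW 0 / st_Omega R B \<epsilon> q else GAf R B \<epsilon> q n / st_alpha R B \<epsilon> q)"
    unfolding st_omega_def st_g_eq st_gi_eq st_u_eq
    by (rule omega_dg[OF gA[OF g] W a Omega_nz[OF g]])
  also have "\<dots> = omx R B \<epsilon> q n"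
  proof -
    define X where "X = 1 + B (R (q$0)) * st_w \<epsilon> q"
    define Y where "Y = 1 + (B (R (q$0)) - R (q$0) * deriv B (R (q$0))) * st_w \<epsilon> q"
    have X: "X \<noteq> 0" and Y: "Y \<noteq> 0" and Rn: "R (q$0) \<noteq> 0" using g by (auto simp: good_def X_def Y_def)
    have al: "st_alpha R B \<epsilon> q = Y / X" by (simp add: st_alpha_def X_def Y_def)
    show ?thesis
      unfolding W0 al GAf_def omx_def aw_def
      unfolding X_def[symmetric] Y_def[symmetric]
      using Omega_nz[OF g] X Y Rn
      by (simp add: field_simps power2_eq_square)
  qed
  finally show ?thesis .
qed

lemma L_pd_sp: "good R B \<epsilon> q \<Longrightarrow> i \<noteq> 0 \<Longrightarrow> pd k (\<lambda>q. omx R B \<epsilon> q i) q = OMG R B \<epsilon> q i k"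
  by (rule pd_grad, rule grad_omx_sp) (auto simp: good_def)

lemma L_pd_0: "good R B \<epsilon> q \<Longrightarrow> k \<noteq> 0 \<Longrightarrow> pd k (\<lambda>q. omx R B \<epsilon> q 0) q =
   - deriv R (q$0) * deriv B (R (q$0)) * wg \<epsilon> q k / (1 + B (R (q$0)) * st_w \<epsilon> q)^2"
proof -
  assume g: "good R B \<epsilon> q" and k: "k \<noteq> 0"
  obtain G where "grad_at (\<lambda>q. omx R B \<epsilon> q 0) G q" and "\<forall>k. k \<noteq> 0 \<longrightarrow>
     G k = - deriv R (q$0) * deriv B (R (q$0)) * wg \<epsilon> q k / (1 + B (R (q$0)) * st_w \<epsilon> q)^2"
    using grad_omx_0[of R q "deriv (deriv R) (q$0)" B \<epsilon>] g unfolding good_def by auto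
  then show ?thesis using k by (simp add: pd_grad)
qed

lemma L_diff: "good R B \<epsilon> q \<Longrightarrow> OMG R B \<epsilon> q i 0 - (- deriv R (q$0) * deriv B (R (q$0)) * wg \<epsilon> q i / (1 + B (R (q$0)) * st_w \<epsilon> q)^2)
   = - deriv R (q$0) * R (q$0) * deriv (deriv B) (R (q$0)) * wg \<epsilon> q i / (1 + (B (R (q$0)) - R (q$0) * deriv B (R (q$0))) * st_w \<epsilon> q)^2"
proof -
  assume g: "good R B \<epsilon> q"
  define X where "X = 1 + B (R (q$0)) * st_w \<epsilon> q"
  define Y where "Y = 1 + (B (R (q$0)) - R (q$0) * deriv B (R (q$0))) * st_w \<epsilon> q"
  have X: "X \<noteq> 0" and Y: "Y \<noteq> 0" using g by (auto simp: good_def X_def Y_def)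
  show ?thesis
    apply (simp only: OMG_def Let_def if_True)
    apply (unfold X_def[symmetric] Y_def[symmetric])
    apply (simp add: field_simps power2_eq_square X Y)
    apply (simp add: X_def Y_def algebra_simps)?
    done
qed

lemma L_sym: "i \<noteq> 0 \<Longrightarrow> j \<noteq> 0 \<Longrightarrow> OMG R B \<epsilon> q i j = OMG R B \<epsilon> q j i"
  by (simp add: OMG_def Let_def wgg_sym)

lemma L_ln: "good R B \<epsilon> q \<Longrightarrow> deriv (deriv B) (R (q$0)) = 0 \<Longrightarrow>
   pd m (\<lambda>q. ln (R (q$0) * st_alpha R B \<epsilon> q)) q = omx R B \<epsilon> q m"
proof -
  assume g: "good R B \<epsilon> q" and b2: "deriv (deriv B) (R (q$0)) = 0"
  have hR: "(R has_real_derivative deriv R (q$0)) (at (q$0))" and pos: "R (q$0) * st_alpha R B \<epsilon> q > 0"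
    using g by (auto simp: good_def)
  have G: "grad_at (\<lambda>q. ln (R (q$0) * st_alpha R B \<epsilon> q))
     (\<lambda>k. (R (q$0) * GAf R B \<epsilon> q k + deriv R (q$0) * e0 k * st_alpha R B \<epsilon> q) / (R (q$0) * st_alpha R B \<epsilon> q)) q"
    by (rule grad_ln[OF grad_mult[OF grad_tf[OF hR] gA[OF g]] pos])
  define X where "X = 1 + B (R (q$0)) * st_w \<epsilon> q"
  define Y where "Y = 1 + (B (R (q$0)) - R (q$0) * deriv B (R (q$0))) * st_w \<epsilon> q"
  have X: "X \<noteq> 0" and Y: "Y \<noteq> 0" and Rn: "R (q$0) \<noteq> 0" using g by (auto simp: good_def X_def Y_def)
  have al: "st_alpha R B \<epsilon> q = Y / X" by (simp add: st_alpha_def X_def Y_def)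
  show ?thesis
    unfolding pd_grad[OF G] al GAf_def omx_def aw_def Let_def b2
    unfolding X_def[symmetric] Y_def[symmetric]
    apply (cases "m = 0")
     apply (simp add: e0_def field_simps power2_eq_square X Y Rn)
     apply (simp add: X_def Y_def algebra_simps)?
    apply (simp add: e0_def field_simps power2_eq_square X Y Rn)
    done
qed

lemma L_Th:
  assumes g: "good R B \<epsilon> q" and hb: "B (R (q$0)) = c1 + c2 * R (q$0)" and hb1: "deriv B (R (q$0)) = c2"
  shows "\<exists>G. grad_at (\<lambda>q. Th0 * R0 / R (q$0) * (1 + c2 * st_w \<epsilon> q * R (q$0) / (1 + c1 * st_w \<epsilon> q))) G q
     \<and> G 0 = - (Th0 * R0 / R (q$0) * (1 + c2 * st_w \<epsilon> q * R (q$0) / (1 + c1 * st_w \<epsilon> q))) * deriv R (q$0) * st_alpha R B \<epsilon> q / R (q$0)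
     \<and> (\<forall>k. k \<noteq> 0 \<longrightarrow> G k = - (Th0 * R0 / R (q$0) * (1 + c2 * st_w \<epsilon> q * R (q$0) / (1 + c1 * st_w \<epsilon> q))) * GAf R B \<epsilon> q k / st_alpha R B \<epsilon> q)"
proof -
  have hR: "(R has_real_derivative deriv R (q$0)) (at (q$0))" and D: "Dd \<epsilon> q \<noteq> 0"
    and Rn: "R (q$0) \<noteq> 0" using g by (auto simp: good_def)
  define X where "X = 1 + (c1 + c2 * R (q$0)) * st_w \<epsilon> q"
  define Y where "Y = 1 + c1 * st_w \<epsilon> q"
  have X: "X \<noteq> 0" and Y: "Y \<noteq> 0" using g hb hb1 by (auto simp: good_def X_def Y_def algebra_simps)
  have al: "st_alpha R B \<epsilon> q = Y / X" unfolding st_alpha_def hb hb1 X_def Y_def by (simp add: algebra_simps)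
  have ga: "k \<noteq> 0 \<Longrightarrow> GAf R B \<epsilon> q k = - R (q$0) * c2 * wg \<epsilon> q k / X^2" for k
    by (simp add: GAf_def aw_def hb hb1 X_def)
  have Y': "1 + c1 * st_w \<epsilon> q \<noteq> 0" using Y by (simp add: Y_def)
  show ?thesis unfolding al
    apply (rule exI, rule conjI)
     apply (rule grad_divide grad_mult grad_add grad_const grad_tf[OF hR] grad_w[OF D] Rn Y')+
    apply (rule conjI)
    subgoal
     apply (simp add: e0_def)
     apply (unfold X_def[symmetric] Y_def[symmetric])
     apply (simp add: field_simps X Y Rn)
     apply (simp add: X_def Y_def algebra_simps power2_eq_square)?
     done
    apply (intro allI impI)
    apply (simp add: ga e0_def)
    apply (unfold X_def[symmetric] Y_def[symmetric])
    apply (simp add: field_simps X Y Rn)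
    apply (simp add: X_def Y_def algebra_simps power2_eq_square)?
    done
qed

lemma L_div:
  assumes g: "good R B \<epsilon> q" and hb: "B (R (q$0)) = c1 + c2 * R (q$0)" and hb1: "deriv B (R (q$0)) = c2"
    and Th: "Th = (\<lambda>q. Th0 * R0 / R (q$0) * (1 + c2 * st_w \<epsilon> q * R (q$0) / (1 + c1 * st_w \<epsilon> q)))"
    and rho: "rho = (\<lambda>q. aR * Th q ^ 4)" and P: "P = (\<lambda>q. rho q / 3)"
  shows "div2 (st_g R B \<epsilon>) (st_gi R B \<epsilon>) (st_fluidT R B \<epsilon> rho P) q n = 0"
proof -
  obtain GT where GT: "grad_at Th GT q" and GT0: "GT 0 = - Th q * deriv R (q$0) * st_alpha R B \<epsilon> q / R (q$0)"
    and GTk: "\<And>k. k \<noteq> 0 \<Longrightarrow> GT k = - Th q * GAf R B \<epsilon> q k / st_alpha R B \<epsilon> q"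
  proof -
    have "\<exists>G. grad_at Th G q \<and> G 0 = - Th q * deriv R (q$0) * st_alpha R B \<epsilon> q / R (q$0)
      \<and> (\<forall>k. k \<noteq> 0 \<longrightarrow> G k = - Th q * GAf R B \<epsilon> q k / st_alpha R B \<epsilon> q)"
      unfolding Th using L_Th[OF g hb hb1, of Th0 R0] by (simp only:)
    then show thesis using that by blast
  qed
  have Grho: "grad_at rho (\<lambda>k. aR * (real 4 * Th q ^ (4 - 1) * GT k) + 0 * Th q ^ 4) q"
    unfolding rho by (rule grad_mult[OF grad_const grad_power[OF GT]])
  have GP: "grad_at P (\<lambda>k. ((aR * (real 4 * Th q ^ (4 - 1) * GT k) + 0 * Th q ^ 4) * 3 - rho q * 0) / 3^2) q"
    unfolding P by (rule grad_divide[OF Grho grad_const]) simp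
  obtain GW where W: "grad_at (st_Omega R B \<epsilon>) GW q" and W0: "GW 0 = deriv R (q$0) * st_alpha R B \<epsilon> q * st_Omega R B \<epsilon> q / R (q$0)"
    using gW[OF g] by blast
  have a: "st_alpha R B \<epsilon> q \<noteq> 0" and Rn: "R (q$0) \<noteq> 0" using g by (auto simp: good_def)
  have p4: "Th q ^ 4 = Th q * Th q ^ 3" by (simp add: eval_nat_numeral)
  have fe: "st_fluidT R B \<epsilon> rho P = fT (st_alpha R B \<epsilon>) (st_Omega R B \<epsilon>) rho P"
    by (intro ext) (simp add: st_fluidT_def fT_def st_u_eq st_gi_eq)
  show ?thesis
    unfolding st_g_eq st_gi_eq fe div_fT[OF gA[OF g] W a Omega_nz[OF g] Grho GP]
    using a Rn Omega_nz[OF g] p4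
    by (auto simp: GT0 GTk W0 rho P field_simps)
qed



lemma diff_deriv: "(f::real \<Rightarrow> real) differentiable (at x) \<Longrightarrow> (f has_real_derivative deriv f x) (at x)"
  by (metis real_differentiableE DERIV_imp_deriv)

lemma pert:
  assumes U: "open U" and D: "\<forall>p\<in>U. Dd \<epsilon> p \<noteq> 0"
    and H: "\<forall>p\<in>U. \<forall>i. i \<noteq> 0 \<longrightarrow> f (p$0) * wg \<epsilon> p i = 0" and p: "p \<in> U"
  shows "f (p$0) = (0::real)"
proof (rule ccontr)
  assume f: "f (p$0) \<noteq> 0"
  have D0: "Dd \<epsilon> p \<noteq> 0" using D p by blast
  have "wg \<epsilon> p 3 = 0" "wg \<epsilon> p 1 = 0" using H p f by auto
  then have e3: "2 * Dd \<epsilon> p = \<epsilon> * p$3 * p$3" and e1: "\<epsilon> * p$3 * p$1 = 0"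
    using D0 by (auto simp: wg_def)
  obtain e where e: "e > 0" "ball p e \<subseteq> U" using U p open_contains_ball by blast
  define p' where "p' = p + (e/2) *\<^sub>R axis 1 (1::real)"
  have "dist p p' < e" using e by (simp add: p'_def dist_norm)
  then have p': "p' \<in> U" using e by auto
  have c0: "p'$0 = p$0" and c3: "p'$3 = p$3" and c1: "p'$1 = p$1 + e/2"
    by (simp_all add: p'_def axis_def)
  have D1: "Dd \<epsilon> p' \<noteq> 0" using D p' by blast
  have "f (p'$0) * wg \<epsilon> p' 1 = 0" using H p' by auto
  then have "wg \<epsilon> p' 1 = 0" using f c0 by simp
  then have "\<epsilon> * p$3 * (p$1 + e/2) = 0" using D1 by (simp add: wg_def c3 c1)
  then have "\<epsilon> * p$3 * p$1 + \<epsilon> * p$3 * (e/2) = 0" by (simp add: algebra_simps)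
  with e1 have "\<epsilon> * p$3 * (e/2) = 0" by linarith
  with e have "\<epsilon> * p$3 = 0" by simp
  with e3 D0 show False by simp
qed

theorem mainTheorem12:
  fixes \<epsilon> :: real and R B :: "real \<Rightarrow> real" and U :: "pt set" and T S :: "real set"
  assumes "\<epsilon> \<in> {-1, 0, 1}" and "open U" and "open T" and "open S"
    and "\<forall>n. \<forall>t\<in>T. (deriv ^^ n) R differentiable (at t)"
    and "\<forall>n. \<forall>x\<in>S. (deriv ^^ n) B differentiable (at x)"
    and "\<forall>p\<in>U. p$0 \<in> T \<and> R (p$0) \<in> S \<and> R (p$0) > 0 \<and> deriv R (p$0) \<noteq> 0
            \<and> 1 + \<epsilon> / 4 * rsq p \<noteq> 0 \<and> 1 + B (R (p$0)) * st_w \<epsilon> p \<noteq> 0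
            \<and> st_alpha R B \<epsilon> p > 0"
  shows "(((\<forall>p\<in>U. \<forall>m n. st_shear R B \<epsilon> p m n = 0) \<and> closed_on U (st_omega R B \<epsilon>))
            \<longleftrightarrow> (\<forall>p\<in>U. (deriv ^^ 2) B (R (p$0)) = 0))
      \<and> ((\<forall>p\<in>U. (deriv ^^ 2) B (R (p$0)) = 0) \<longrightarrow>
           (\<forall>p\<in>U. \<forall>m. pd m (\<lambda>q. ln (R (q$0) * st_alpha R B \<epsilon> q)) p = st_omega R B \<epsilon> p m))
      \<and> (\<forall>b1 b2 aR \<Theta>0 R0. (\<forall>p\<in>U. B (R (p$0)) = b1 + b2 * R (p$0)) \<longrightarrow>
           (let \<Theta>r = (\<lambda>q. \<Theta>0 * R0 / R (q$0)
                          * (1 + b2 * st_w \<epsilon> q * R (q$0) / (1 + b1 * st_w \<epsilon> q)));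
                \<rho>r = (\<lambda>q. aR * \<Theta>r q ^ 4);
                pr = (\<lambda>q. \<rho>r q / 3)
            in \<forall>p\<in>U. \<forall>n. div2 (st_g R B \<epsilon>) (st_gi R B \<epsilon>) (st_fluidT R B \<epsilon> \<rho>r pr) p n = 0))"
proof -
  note A = assms
  have d2: "(deriv ^^ 2) B = deriv (deriv B)" by (simp add: numeral_2_eq_2)
  have good: "good R B \<epsilon> q" if q: "q \<in> U" for q
  proof -
    have h: "q$0 \<in> T" "R (q$0) \<in> S" "R (q$0) > 0" "deriv R (q$0) \<noteq> 0" "1 + \<epsilon> / 4 * rsq q \<noteq> 0"
      "1 + B (R (q$0)) * st_w \<epsilon> q \<noteq> 0" "st_alpha R B \<epsilon> q > 0" using A(7) q by auto
    have r0: "R differentiable (at (q$0))" using A(5) h(1) spec[OF A(5), of 0] by simp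
    have r1: "deriv R differentiable (at (q$0))" using h(1) spec[OF A(5), of 1] by simp
    have b0: "B differentiable (at (R (q$0)))" using h(2) spec[OF A(6), of 0] by simp
    have b1: "deriv B differentiable (at (R (q$0)))" using h(2) spec[OF A(6), of 1] by simp
    have nc: "1 + (B (R (q$0)) - R (q$0) * deriv B (R (q$0))) * st_w \<epsilon> q \<noteq> 0"
      using h(7) by (auto simp: st_alpha_def)
    show ?thesis unfolding good_def using h nc diff_deriv[OF r0] diff_deriv[OF r1] diff_deriv[OF b0] diff_deriv[OF b1]
      by (simp add: Dd_def)
  qed
  have Dnz: "\<forall>p\<in>U. Dd \<epsilon> p \<noteq> 0" using good by (simp add: good_def)
  have shear0: "\<forall>p\<in>U. \<forall>m n. st_shear R B \<epsilon> p m n = 0" using good L_shear by blast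
  have pdOM: "pd m (\<lambda>q. st_omega R B \<epsilon> q n) p = pd m (\<lambda>q. omx R B \<epsilon> q n) p" if "p \<in> U" for p m n
    by (rule pd_local[OF A(2) that]) (simp add: L_om good)
  have key: "pd 0 (\<lambda>q. omx R B \<epsilon> q i) p = pd i (\<lambda>q. omx R B \<epsilon> q 0) p
      \<longleftrightarrow> deriv (deriv B) (R (p$0)) * wg \<epsilon> p i = 0" if p: "p \<in> U" and i: "i \<noteq> 0" for p i
  proof -
    have g: "good R B \<epsilon> p" using good p .
    have nz: "deriv R (p$0) \<noteq> 0" "R (p$0) \<noteq> 0" "1 + (B (R (p$0)) - R (p$0) * deriv B (R (p$0))) * st_w \<epsilon> p \<noteq> 0"
      using g by (auto simp: good_def)
    have "pd 0 (\<lambda>q. omx R B \<epsilon> q i) p - pd i (\<lambda>q. omx R B \<epsilon> q 0) p =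
       - deriv R (p$0) * R (p$0) * deriv (deriv B) (R (p$0)) * wg \<epsilon> p i / (1 + (B (R (p$0)) - R (p$0) * deriv B (R (p$0))) * st_w \<epsilon> p)^2"
      using L_diff[OF g, of i] by (simp add: L_pd_sp[OF g i] L_pd_0[OF g i])
    then show ?thesis using nz by auto
  qed
  have closed_iff: "closed_on U (st_omega R B \<epsilon>) \<longleftrightarrow>
      (\<forall>p\<in>U. \<forall>i. i \<noteq> 0 \<longrightarrow> deriv (deriv B) (R (p$0)) * wg \<epsilon> p i = 0)"
  proof
    assume c: "closed_on U (st_omega R B \<epsilon>)"
    show "\<forall>p\<in>U. \<forall>i. i \<noteq> 0 \<longrightarrow> deriv (deriv B) (R (p$0)) * wg \<epsilon> p i = 0"
    proof (intro ballI allI impI)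
      fix p i assume p: "p \<in> U" and i: "(i::4) \<noteq> 0"
      have "pd 0 (\<lambda>q. st_omega R B \<epsilon> q i) p = pd i (\<lambda>q. st_omega R B \<epsilon> q 0) p"
        using c p unfolding closed_on_def by blast
      then show "deriv (deriv B) (R (p$0)) * wg \<epsilon> p i = 0" using key[OF p i] pdOM[OF p] by simp
    qed
  next
    assume H: "\<forall>p\<in>U. \<forall>i. i \<noteq> 0 \<longrightarrow> deriv (deriv B) (R (p$0)) * wg \<epsilon> p i = 0"
    show "closed_on U (st_omega R B \<epsilon>)" unfolding closed_on_def
    proof (intro ballI allI)
      fix p m n assume p: "p \<in> U"
      have g: "good R B \<epsilon> p" using good p .
      show "pd m (\<lambda>q. st_omega R B \<epsilon> q n) p = pd n (\<lambda>q. st_omega R B \<epsilon> q m) p"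
        unfolding pdOM[OF p]
      proof (cases "m = 0"; cases "n = 0")
        assume "m = 0" "n = 0" then show "pd m (\<lambda>q. omx R B \<epsilon> q n) p = pd n (\<lambda>q. omx R B \<epsilon> q m) p" by simp
      next
        assume m: "m = 0" and n: "n \<noteq> 0"
        then show "pd m (\<lambda>q. omx R B \<epsilon> q n) p = pd n (\<lambda>q. omx R B \<epsilon> q m) p"
          using key[OF p n] H p by simp
      next
        assume m: "m \<noteq> 0" and n: "n = 0"
        then show "pd m (\<lambda>q. omx R B \<epsilon> q n) p = pd n (\<lambda>q. omx R B \<epsilon> q m) p"
          using key[OF p m] H p by simp
      next
        assume m: "m \<noteq> 0" and n: "n \<noteq> 0"
        then show "pd m (\<lambda>q. omx R B \<epsilon> q n) p = pd n (\<lambda>q. omx R B \<epsilon> q m) p"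
          by (simp add: L_pd_sp[OF g] L_sym)
      qed
    qed
  qed
  have pert_iff: "(\<forall>p\<in>U. \<forall>i. i \<noteq> 0 \<longrightarrow> deriv (deriv B) (R (p$0)) * wg \<epsilon> p i = 0)
      \<longleftrightarrow> (\<forall>p\<in>U. deriv (deriv B) (R (p$0)) = 0)"
  proof
    assume H: "\<forall>p\<in>U. \<forall>i. i \<noteq> 0 \<longrightarrow> deriv (deriv B) (R (p$0)) * wg \<epsilon> p i = 0"
    show "\<forall>p\<in>U. deriv (deriv B) (R (p$0)) = 0"
      using pert[OF A(2) Dnz, of "\<lambda>t. deriv (deriv B) (R t)"] H by blast
  qed simp
  have part1: "((\<forall>p\<in>U. \<forall>m n. st_shear R B \<epsilon> p m n = 0) \<and> closed_on U (st_omega R B \<epsilon>))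
            \<longleftrightarrow> (\<forall>p\<in>U. (deriv ^^ 2) B (R (p$0)) = 0)"
    using shear0 closed_iff pert_iff d2 by simp
  have part2: "(\<forall>p\<in>U. (deriv ^^ 2) B (R (p$0)) = 0) \<longrightarrow>
           (\<forall>p\<in>U. \<forall>m. pd m (\<lambda>q. ln (R (q$0) * st_alpha R B \<epsilon> q)) p = st_omega R B \<epsilon> p m)"
    using good by (simp add: d2 L_ln L_om)
  have part3: "\<forall>b1 b2 aR \<Theta>0 R0. (\<forall>p\<in>U. B (R (p$0)) = b1 + b2 * R (p$0)) \<longrightarrow>
           (let \<Theta>r = (\<lambda>q. \<Theta>0 * R0 / R (q$0)
                          * (1 + b2 * st_w \<epsilon> q * R (q$0) / (1 + b1 * st_w \<epsilon> q)));
                \<rho>r = (\<lambda>q. aR * \<Theta>r q ^ 4);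
                pr = (\<lambda>q. \<rho>r q / 3)
            in \<forall>p\<in>U. \<forall>n. div2 (st_g R B \<epsilon>) (st_gi R B \<epsilon>) (st_fluidT R B \<epsilon> \<rho>r pr) p n = 0)"
  proof (intro allI impI)
    fix c1 c2 aR Th0 R0
    assume hb: "\<forall>p\<in>U. B (R (p$0)) = c1 + c2 * R (p$0)"
    have hb1: "deriv B (R (p$0)) = c2" if p: "p \<in> U" for p
    proof -
      have g: "good R B \<epsilon> p" using good p .
      have hR: "(R has_real_derivative deriv R (p$0)) (at (p$0))"
        and hB: "(B has_real_derivative deriv B (R (p$0))) (at (R (p$0)))"
        and nz: "deriv R (p$0) \<noteq> 0" using g by (auto simp: good_def)
      have G: "grad_at (\<lambda>q. B (R (q$0)) - c2 * R (q$0))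
         (\<lambda>k. deriv B (R (p$0)) * (deriv R (p$0) * e0 k) - (c2 * (deriv R (p$0) * e0 k) + 0 * R (p$0))) p"
        by (rule grad_diff[OF grad_tff[OF hB hR] grad_mult[OF grad_const grad_tf[OF hR]]])
      have "pd 0 (\<lambda>q. B (R (q$0)) - c2 * R (q$0)) p = pd 0 (\<lambda>q. c1) p"
        by (rule pd_local[OF A(2) p]) (simp add: hb)
      then have "(deriv B (R (p$0)) - c2) * deriv R (p$0) = 0"
        unfolding pd_grad[OF G] pd_grad[OF grad_const] by (simp add: e0_def algebra_simps)
      then show ?thesis using nz by simp
    qed
    show "let \<Theta>r = (\<lambda>q. Th0 * R0 / R (q$0)
                          * (1 + c2 * st_w \<epsilon> q * R (q$0) / (1 + c1 * st_w \<epsilon> q)));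
                \<rho>r = (\<lambda>q. aR * \<Theta>r q ^ 4);
                pr = (\<lambda>q. \<rho>r q / 3)
            in \<forall>p\<in>U. \<forall>n. div2 (st_g R B \<epsilon>) (st_gi R B \<epsilon>) (st_fluidT R B \<epsilon> \<rho>r pr) p n = 0"
      unfolding Let_def
    proof (intro ballI allI)
      fix p n assume p: "p \<in> U"
      show "div2 (st_g R B \<epsilon>) (st_gi R B \<epsilon>) (st_fluidT R B \<epsilon>
           (\<lambda>q. aR * (Th0 * R0 / R (q$0) * (1 + c2 * st_w \<epsilon> q * R (q$0) / (1 + c1 * st_w \<epsilon> q))) ^ 4)
           (\<lambda>q. aR * (Th0 * R0 / R (q$0) * (1 + c2 * st_w \<epsilon> q * R (q$0) / (1 + c1 * st_w \<epsilon> q))) ^ 4 / 3)) p n = 0"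
        by (rule L_div[OF good[OF p] hb[rule_format, OF p] hb1[OF p] refl refl refl])
    qed
  qed
  show ?thesis using part1 part2 part3 by blast
qed


end
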